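(* Let $s>0$, $\kappa>0$, and put $q=e^{-2s\kappa^2}\in(0,1)$. Let $b\in\mathbb{C}$ and $n\ge0$. Then for every $y\in\mathbb{R}$, $$\frac{1}{\sqrt{2\pi s}}\int_{\mathbb{R}}H_n\big(b\,e^{i\kappa x},s\,\big|\,q\big)\,e^{ixy-\frac{x^2}{2s}}\,dx=q^{\frac{n^2}{4}}\,H_n\big(b\,e^{-s\kappa y},\,q^{n-3}s\,\big|\,q^{-1}\big)\,e^{-\frac{sy^2}{2}}.$$
   Context: For $r>0$, $r\neq1$ and $m\ge0$: $\{m\}_r=\frac{1-r^m}{1-r}$, $\{m\}_r!=\prod_{j=1}^m\{j\}_r$, $\{2m\}_r!!=\prod_{j=1}^m\{2j\}_r$, $\{0\}_r!=\{0\}_r!!=1$. For $0\le k\le\lfloor n/2\rfloor$, $c_{n,k}(r)=\frac{(-1)^kr^{k(k-1)}\{n\}_r!}{\{n-2k\}_r!\,\{2k\}_r!!}$, and $$H_n(z,s|r)=\sum_{k=0}^{\lfloor n/2\rfloor}c_{n,k}(r)\,s^kz^{n-2k}\quad(z\in\mathbb{C});$$ the left side uses $r=q$, the right side uses $r=q^{-1}$. *)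

theory Defs
  imports "HOL-Analysis.Analysis"
begin

definition qnum :: "real \<Rightarrow> nat \<Rightarrow> real" where
  "qnum r m = (1 - r ^ m) / (1 - r)"

definition qfact :: "real \<Rightarrow> nat \<Rightarrow> real" where
  "qfact r m = (\<Prod>j=1..m. qnum r j)"

definition qdfact :: "real \<Rightarrow> nat \<Rightarrow> real" where
  "qdfact r m = (\<Prod>j=1..m. qnum r (2 * j))"

definition hcoef :: "real \<Rightarrow> nat \<Rightarrow> nat \<Rightarrow> real" where
  "hcoef r n k = (-1) ^ k * r ^ (k * (k - 1)) * qfact r n
                 / (qfact r (n - 2 * k) * qdfact r k)"

definition qHermite :: "nat \<Rightarrow> complex \<Rightarrow> complex \<Rightarrow> real \<Rightarrow> complex" where
  "qHermite n z s r = (\<Sum>k\<le>n div 2. complex_of_real (hcoef r n k) * s ^ k * z ^ (n - 2 * k))"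

end

theory Submission
  imports Defs "HOL-Probability.Probability"
begin


lemma gauss:
  fixes a ss :: real assumes ss: "ss > 0"
  shows "integrable lborel (\<lambda>x. exp (\<i> * complex_of_real (a*x) - complex_of_real (x\<^sup>2/(2 * ss))))"
    and "(LINT x|lborel. exp (\<i> * complex_of_real (a*x) - complex_of_real (x\<^sup>2/(2 * ss))))
          = complex_of_real (sqrt (2*pi * ss) * exp (-ss*a\<^sup>2/2))"
proof -
  define f where "f = (\<lambda>x::real. exp (\<i> * complex_of_real (a*x) - complex_of_real (x\<^sup>2/(2 * ss))))"
  define c where "c = sqrt ss"
  have c: "c > 0" "c\<^sup>2 = ss" using ss by (auto simp: c_def)
  define t where "t = a * c"
  have fc: "f (0 + c * u) = complex_of_real (sqrt (2*pi)) * (std_normal_density u *\<^sub>R iexp (t * u))" for u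
  proof -
    have e1: "(0 + c*u)\<^sup>2/(2 * ss) = u\<^sup>2/2" using c ss by (simp add: power_mult_distrib)
    have e2: "a * (0 + c * u) = t * u" by (simp add: t_def)
    have "f (0 + c * u) = exp (\<i> * complex_of_real (t*u) - complex_of_real (u\<^sup>2/2))"
      unfolding f_def e1 e2 ..
    also have "\<dots> = exp (\<i> * complex_of_real (t*u)) * exp (complex_of_real (- (u\<^sup>2/2)))"
      by (simp only: diff_conv_add_uminus exp_add of_real_minus)
    also have "\<dots> = exp (\<i> * complex_of_real (t*u)) * complex_of_real (exp (- (u\<^sup>2/2)))"
      by (simp only: exp_of_real)
    also have "\<dots> = complex_of_real (sqrt (2*pi)) * (std_normal_density u *\<^sub>R iexp (t * u))"
    proof -
      have "sqrt (2*pi) * std_normal_density u = exp (- (u\<^sup>2/2))"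
        by (simp add: std_normal_density_def)
      then show ?thesis
        by (simp only: scaleR_conv_of_real mult.assoc[symmetric] of_real_mult[symmetric] mult.commute)
    qed
    finally show ?thesis .
  qed
  have meas: "(\<lambda>x. iexp (t * x)) \<in> borel_measurable lborel" by measurable
  have "integrable std_normal_distribution (\<lambda>x. iexp (t * x))"
    using real_dist_normal_dist by (intro prob_space.integrable_iexp) (auto simp: real_distribution_def)
  hence i1: "integrable lborel (\<lambda>u. std_normal_density u *\<^sub>R iexp (t * u))"
    by (subst (asm) integrable_density) (auto simp: normal_density_nonneg meas)
  have "integrable lborel (\<lambda>u. f (0 + c * u))"
    unfolding fc by (intro integrable_mult_right i1)
  thus intf: "integrable lborel f" using lborel_integrable_real_affine_iff[of c f 0] c by simp
  have ch: "(LINT u|lborel. std_normal_density u *\<^sub>R iexp (t * u)) = complex_of_real (exp (- (t\<^sup>2) / 2))"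
    using char_std_normal_distribution unfolding char_def
    by (subst (asm) integral_density) (auto simp: normal_density_nonneg meas dest: fun_cong[where x=t])
  have "integral\<^sup>L lborel f = \<bar>c\<bar> *\<^sub>R integral\<^sup>L lborel (\<lambda>u. f (0 + c * u))"
    by (rule lborel_integral_real_affine) (use c in auto)
  also have "\<dots> = complex_of_real (c * sqrt (2*pi) * exp (- (t\<^sup>2) / 2))"
  proof -
    have "\<bar>c\<bar> *\<^sub>R integral\<^sup>L lborel (\<lambda>u. f (0 + c * u))
        = complex_of_real c * (complex_of_real (sqrt (2*pi)) * (LINT u|lborel. std_normal_density u *\<^sub>R iexp (t * u)))"
      unfolding fc integral_mult_right_zero abs_of_pos[OF c(1)] by (simp only: scaleR_conv_of_real)
    also have "\<dots> = complex_of_real (c * sqrt (2*pi) * exp (- (t\<^sup>2) / 2))"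
      unfolding ch by (simp only: of_real_mult mult.assoc)
    finally show ?thesis .
  qed
  also have "c * sqrt (2*pi) = sqrt (2*pi * ss)" using c ss by (simp add: c_def real_sqrt_mult)
  also have "t\<^sup>2 = ss * a\<^sup>2" using c by (simp add: t_def power_mult_distrib)
  finally show "integral\<^sup>L lborel f = complex_of_real (sqrt (2*pi * ss) * exp (-ss*a\<^sup>2/2))" by simp
qed


lemma qnum_inv:
  assumes "q > 0" "q \<noteq> 1"
  shows "qnum (1/q) m = q powr (1 - real m) * qnum q m"
proof -
  have "q powr (1 - real m) = q / q ^ m" using assms by (simp add: powr_diff powr_realpow)
  moreover have "q ^ m > 0" using assms by simp
  ultimately show ?thesis using assms unfolding qnum_def
    by (simp add: field_simps power_one_over)
qed

lemma qfact_inv: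
  assumes "q > 0" "q \<noteq> 1"
  shows "qfact (1/q) m = q powr (- (real m * (real m - 1) / 2)) * qfact q m"
proof (induction m)
  case 0 then show ?case using assms by (simp add: qfact_def)
next
  case (Suc m)
  have "qfact (1/q) (Suc m) = qfact (1/q) m * qnum (1/q) (Suc m)"
    by (simp add: qfact_def prod.cl_ivl_Suc)
  also have "\<dots> = (q powr (- (real m * (real m - 1) / 2)) * q powr (1 - real (Suc m))) * (qfact q m * qnum q (Suc m))"
    using Suc assms by (simp add: qnum_inv mult_ac)
  also have "q powr (- (real m * (real m - 1) / 2)) * q powr (1 - real (Suc m)) = q powr (- (real (Suc m) * (real (Suc m) - 1) / 2))"
    unfolding powr_add[symmetric] by (rule arg_cong[where f="\<lambda>x. q powr x"]) (simp add: field_simps)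
  also have "qfact q m * qnum q (Suc m) = qfact q (Suc m)"
    by (simp add: qfact_def prod.cl_ivl_Suc)
  finally show ?case .
qed

lemma qdfact_inv:
  assumes "q > 0" "q \<noteq> 1"
  shows "qdfact (1/q) m = q powr (- (real m)\<^sup>2) * qdfact q m"
proof (induction m)
  case 0 then show ?case using assms by (simp add: qdfact_def)
next
  case (Suc m)
  have "qdfact (1/q) (Suc m) = qdfact (1/q) m * qnum (1/q) (2 * Suc m)"
    by (simp add: qdfact_def prod.cl_ivl_Suc)
  also have "\<dots> = (q powr (- (real m)\<^sup>2) * q powr (1 - real (2 * Suc m))) * (qdfact q m * qnum q (2 * Suc m))"
    using Suc assms by (simp add: qnum_inv mult_ac)
  also have "q powr (- (real m)\<^sup>2) * q powr (1 - real (2 * Suc m)) = q powr (- (real (Suc m))\<^sup>2)"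
    unfolding powr_add[symmetric] by (rule arg_cong[where f="\<lambda>x. q powr x"]) (simp add: field_simps power2_eq_square)
  also have "qdfact q m * qnum q (2 * Suc m) = qdfact q (Suc m)"
    by (simp add: qdfact_def prod.cl_ivl_Suc)
  finally show ?case .
qed

lemma hcoef_split:
  "hcoef r n k = (-1) ^ k * r ^ (k * (k - 1)) * (qfact r n / (qfact r (n - 2 * k) * qdfact r k))"
  unfolding hcoef_def by simp

lemma hcoef_inv:
  assumes "q > 0" "q \<noteq> 1" "2 * k \<le> n"
  shows "hcoef (1/q) n k = (-1) ^ k * q powr (real k ^ 2 - 2 * real n * real k + 3 * real k + real k * (real k - 1))
      * (qfact q n / (qfact q (n - 2 * k) * qdfact q k))"
proof -
  have rk: "real (k * (k - 1)) = real k * (real k - 1)" by (cases k) (auto simp: algebra_simps)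
  have rn: "real (n - 2 * k) = real n - 2 * real k" using assms by simp
  have p: "(1/q) ^ (k * (k - 1)) = q powr (- (real k * (real k - 1)))"
  proof -
    have "(1/q) ^ (k * (k - 1)) = inverse (q ^ (k * (k - 1)))" by (simp add: power_one_over divide_inverse power_inverse)
    also have "q ^ (k * (k - 1)) = q powr real (k * (k - 1))" by (rule powr_realpow[OF assms(1), symmetric])
    finally have "(1/q) ^ (k * (k - 1)) = inverse (q powr (real k * (real k - 1)))" unfolding rk .
    thus ?thesis by (simp add: powr_minus)
  qed
  have "hcoef (1/q) n k = (-1)^k * (q powr (- (real k * (real k - 1))) * q powr (- (real n * (real n - 1) / 2))
      / (q powr (- (real (n - 2*k) * (real (n - 2*k) - 1) / 2)) * q powr (- (real k)\<^sup>2)))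
      * (qfact q n / (qfact q (n - 2 * k) * qdfact q k))"
    unfolding hcoef_split p qfact_inv[OF assms(1,2)] qdfact_inv[OF assms(1,2)] by (simp add: field_simps)
  also have "q powr (- (real k * (real k - 1))) * q powr (- (real n * (real n - 1) / 2))
      / (q powr (- (real (n - 2*k) * (real (n - 2*k) - 1) / 2)) * q powr (- (real k)\<^sup>2))
      = q powr (real k ^ 2 - 2 * real n * real k + 3 * real k + real k * (real k - 1))"
    unfolding rn by (simp add: powr_add[symmetric] powr_diff[symmetric], rule arg_cong[where f="\<lambda>x. q powr x"], simp add: field_simps power2_eq_square)
  finally show ?thesis .
qed


lemma term_id:
  fixes ss \<kappa> y :: real
  assumes ss: "ss > 0" and ka: "\<kappa> > 0" and qd: "q = exp (- 2 * ss * \<kappa>\<^sup>2)" and kn: "2 * k \<le> n"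
  shows "hcoef q n k * exp (- ss * (real (n - 2 * k) * \<kappa> + y)\<^sup>2 / 2)
    = q powr (real n ^ 2 / 4) * hcoef (1/q) n k * (q powr (real n - 3)) ^ k
      * exp (- ss * \<kappa> * y) ^ (n - 2 * k) * exp (- ss * y\<^sup>2 / 2)"
proof -
  define L where "L = - 2 * ss * \<kappa>\<^sup>2"
  have L: "L < 0" using ss ka by (simp add: L_def)
  have q: "q = exp L" using qd L_def by simp
  have q0: "q > 0" "q \<noteq> 1" using L q by auto
  have lnq: "ln q = L" using q by simp
  have pw: "q powr x = exp (x * L)" for x using q0 by (simp add: powr_def lnq)
  define P where "P = qfact q n / (qfact q (n - 2 * k) * qdfact q k)"
  have rk: "real (k * (k - 1)) = real k * (real k - 1)" by (cases k) (auto simp: algebra_simps)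
  have rn: "real (n - 2 * k) = real n - 2 * real k" using kn by simp
  have h1: "hcoef q n k = (-1)^k * exp (real k * (real k - 1) * L) * P"
    unfolding hcoef_split P_def q exp_of_nat_mult[symmetric] rk ..
  have h2: "hcoef (1/q) n k = (-1)^k * exp ((real k ^ 2 - 2 * real n * real k + 3 * real k + real k * (real k - 1)) * L) * P"
    unfolding hcoef_inv[OF q0 kn] P_def pw ..
  have h3: "(q powr (real n - 3)) ^ k = exp (real k * ((real n - 3) * L))"
    unfolding pw exp_of_nat_mult ..
  have h4: "exp (- ss * \<kappa> * y) ^ (n - 2 * k) = exp ((real n - 2 * real k) * (- ss * \<kappa> * y))"
    unfolding exp_of_nat_mult[symmetric] rn ..
  have ex: "real k * (real k - 1) * L + (- ss * ((real n - 2 * real k) * \<kappa> + y)\<^sup>2 / 2)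
     = real n ^ 2 / 4 * L + (real k ^ 2 - 2 * real n * real k + 3 * real k + real k * (real k - 1)) * L
       + real k * ((real n - 3) * L) + (real n - 2 * real k) * (- ss * \<kappa> * y) + (- ss * y\<^sup>2 / 2)"
    unfolding L_def by (simp add: field_simps power2_eq_square)
  have "hcoef q n k * exp (- ss * (real (n - 2 * k) * \<kappa> + y)\<^sup>2 / 2)
      = (-1)^k * P * exp (real k * (real k - 1) * L + (- ss * ((real n - 2 * real k) * \<kappa> + y)\<^sup>2 / 2))"
    unfolding h1 rn exp_add by (simp add: mult_ac)
  also have "\<dots> = (-1)^k * P * exp (real n ^ 2 / 4 * L + (real k ^ 2 - 2 * real n * real k + 3 * real k + real k * (real k - 1)) * L
       + real k * ((real n - 3) * L) + (real n - 2 * real k) * (- ss * \<kappa> * y) + (- ss * y\<^sup>2 / 2))"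
    unfolding ex ..
  also have "\<dots> = q powr (real n ^ 2 / 4) * hcoef (1/q) n k * (q powr (real n - 3)) ^ k
      * exp (- ss * \<kappa> * y) ^ (n - 2 * k) * exp (- ss * y\<^sup>2 / 2)"
    unfolding h2 h3 h4 exp_add pw by (simp add: mult_ac exp_of_nat_mult[symmetric])
  finally show ?thesis .
qed

theorem mainTheorem11:
  fixes s \<kappa> y :: real and b :: complex and n :: nat
  assumes "s > 0" and "\<kappa> > 0"
  defines "q \<equiv> exp (- 2 * s * \<kappa>\<^sup>2)"
  shows "complex_of_real (1 / sqrt (2 * pi * s)) *
           (LINT x|lborel. qHermite n (b * exp (\<i> * complex_of_real (\<kappa> * x))) (complex_of_real s) q
                           * exp (\<i> * complex_of_real (x * y) - complex_of_real (x\<^sup>2 / (2 * s))))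
         = complex_of_real (q powr (real n ^ 2 / 4))
           * qHermite n (b * complex_of_real (exp (- s * \<kappa> * y))) (complex_of_real (q powr (real n - 3) * s)) (1 / q)
           * complex_of_real (exp (- s * y\<^sup>2 / 2))"
proof -
  define F where "F = (\<lambda>k x. exp (\<i> * complex_of_real ((real (n - 2 * k) * \<kappa> + y) * x) - complex_of_real (x\<^sup>2 / (2 * s))))"
  define a where "a = (\<lambda>k. complex_of_real (hcoef q n k) * complex_of_real s ^ k * b ^ (n - 2 * k))"
  have pt: "qHermite n (b * exp (\<i> * complex_of_real (\<kappa> * x))) (complex_of_real s) q
             * exp (\<i> * complex_of_real (x * y) - complex_of_real (x\<^sup>2 / (2 * s)))
           = (\<Sum>k\<le>n div 2. a k * F k x)" for x
  proof -
    have "(b * exp (\<i> * complex_of_real (\<kappa> * x))) ^ m * exp (\<i> * complex_of_real (x * y) - complex_of_real (x\<^sup>2 / (2 * s)))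
        = b ^ m * exp (\<i> * complex_of_real ((real m * \<kappa> + y) * x) - complex_of_real (x\<^sup>2 / (2 * s)))" for m
    proof -
      have "(b * exp (\<i> * complex_of_real (\<kappa> * x))) ^ m * exp (\<i> * complex_of_real (x * y) - complex_of_real (x\<^sup>2 / (2 * s)))
         = b ^ m * exp (of_nat m * (\<i> * complex_of_real (\<kappa> * x)) + (\<i> * complex_of_real (x * y) - complex_of_real (x\<^sup>2 / (2 * s))))"
        by (simp add: power_mult_distrib exp_of_nat_mult exp_add)
      also have "of_nat m * (\<i> * complex_of_real (\<kappa> * x)) + (\<i> * complex_of_real (x * y) - complex_of_real (x\<^sup>2 / (2 * s)))
          = \<i> * complex_of_real ((real m * \<kappa> + y) * x) - complex_of_real (x\<^sup>2 / (2 * s))"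
        by (simp add: algebra_simps)
      finally show ?thesis .
    qed
    then show ?thesis unfolding qHermite_def sum_distrib_right a_def F_def
      by (intro sum.cong refl) (simp add: mult_ac)
  qed
  have intF: "integrable lborel (F k)" for k
    unfolding F_def by (rule gauss(1)[OF assms(1)])
  have IF: "integral\<^sup>L lborel (F k) = complex_of_real (sqrt (2*pi * s) * exp (-s*(real (n - 2 * k) * \<kappa> + y)\<^sup>2/2))" for k
    unfolding F_def by (rule gauss(2)[OF assms(1)])
  have "(LINT x|lborel. qHermite n (b * exp (\<i> * complex_of_real (\<kappa> * x))) (complex_of_real s) q
                           * exp (\<i> * complex_of_real (x * y) - complex_of_real (x\<^sup>2 / (2 * s))))
        = (\<Sum>k\<le>n div 2. a k * integral\<^sup>L lborel (F k))"
    unfolding pt by (subst Bochner_Integration.integral_sum) (auto intro: intF simp: integral_mult_right_zero)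
  also have "\<dots> = (\<Sum>k\<le>n div 2. a k * complex_of_real (sqrt (2*pi * s) * exp (-s*(real (n - 2 * k) * \<kappa> + y)\<^sup>2/2)))"
    unfolding IF ..
  finally have I: "(LINT x|lborel. qHermite n (b * exp (\<i> * complex_of_real (\<kappa> * x))) (complex_of_real s) q
                           * exp (\<i> * complex_of_real (x * y) - complex_of_real (x\<^sup>2 / (2 * s))))
        = (\<Sum>k\<le>n div 2. a k * complex_of_real (sqrt (2*pi * s) * exp (-s*(real (n - 2 * k) * \<kappa> + y)\<^sup>2/2)))" .
  have sq: "sqrt (2*pi * s) > 0" using assms(1) by simp
  show ?thesis
    unfolding I unfolding qHermite_def sum_distrib_left sum_distrib_right
  proof (intro sum.cong refl)
    fix k assume "k \<in> {..n div 2}"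
    hence kn: "2 * k \<le> n" by auto
    have T: "hcoef q n k * exp (- s * (real (n - 2 * k) * \<kappa> + y)\<^sup>2 / 2)
    = q powr (real n ^ 2 / 4) * hcoef (1/q) n k * (q powr (real n - 3)) ^ k
      * exp (- s * \<kappa> * y) ^ (n - 2 * k) * exp (- s * y\<^sup>2 / 2)"
      by (rule term_id[OF assms(1,2) q_def[THEN meta_eq_to_obj_eq] kn])
    have "complex_of_real (1 / sqrt (2 * pi * s)) * (a k * complex_of_real (sqrt (2*pi * s) * exp (-s*(real (n - 2 * k) * \<kappa> + y)\<^sup>2/2)))
       = complex_of_real s ^ k * b ^ (n - 2 * k) * complex_of_real (hcoef q n k * exp (- s * (real (n - 2 * k) * \<kappa> + y)\<^sup>2 / 2))"
    proof -
      have r: "(1 / sqrt (2 * pi * s)) * (sqrt (2*pi * s) * exp (-s*(real (n - 2 * k) * \<kappa> + y)\<^sup>2/2))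
             = exp (-s*(real (n - 2 * k) * \<kappa> + y)\<^sup>2/2)" using sq assms(1) by simp
      have "complex_of_real (1 / sqrt (2 * pi * s)) * (a k * complex_of_real (sqrt (2*pi * s) * exp (-s*(real (n - 2 * k) * \<kappa> + y)\<^sup>2/2)))
          = a k * complex_of_real ((1 / sqrt (2 * pi * s)) * (sqrt (2*pi * s) * exp (-s*(real (n - 2 * k) * \<kappa> + y)\<^sup>2/2)))"
        by (simp only: of_real_mult mult_ac)
      also have "\<dots> = a k * complex_of_real (exp (-s*(real (n - 2 * k) * \<kappa> + y)\<^sup>2/2))" unfolding r ..
      finally show ?thesis unfolding a_def by (simp only: of_real_mult mult_ac)
    qed
    also have "\<dots> = complex_of_real (q powr (real n ^ 2 / 4)) *
         (complex_of_real (hcoef (1 / q) n k) * complex_of_real (q powr (real n - 3) * s) ^ k *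
          (b * complex_of_real (exp (- s * \<kappa> * y))) ^ (n - 2 * k)) *
         complex_of_real (exp (- s * y\<^sup>2 / 2))"
      unfolding T by (simp only: of_real_mult of_real_power power_mult_distrib mult_ac)
    finally show "complex_of_real (1 / sqrt (2 * pi * s)) * (a k * complex_of_real (sqrt (2*pi * s) * exp (-s*(real (n - 2 * k) * \<kappa> + y)\<^sup>2/2)))
       = complex_of_real (q powr (real n ^ 2 / 4)) *
         (complex_of_real (hcoef (1 / q) n k) * complex_of_real (q powr (real n - 3) * s) ^ k *
          (b * complex_of_real (exp (- s * \<kappa> * y))) ^ (n - 2 * k)) *
         complex_of_real (exp (- s * y\<^sup>2 / 2))" .
  qed
qed


end
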